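(* Let $\psi_n,\psi^*_n$ ($n\in\mathbb{Z}$) satisfy the canonical anticommutation relations $[\psi^*_m,\psi^*_n]_+=[\psi_m,\psi_n]_+=0$, $[\psi^*_m,\psi_n]_+=\delta_{mn}$. Let $\gamma_n\ge0$ ($n\in\mathbb{Z}$) with only finitely many nonzero and $S_n=\sinh\gamma_n<1$, $C_n=\cosh\gamma_n$. Define $H_{mn}=\psi_n\psi^*_m+(-1)^{m-n+1}\psi_m\psi^*_n$ for $m>n$, $$\mathcal H=\sum_{m>n}(-1)^{m-n}C_mS_{m-1}\cdots S_{n+1}C_nH_{mn},$$ $$\phi(\theta)=\sum_nC_ne^{in\theta}\prod_{j\le n-1}(1+S_je^{-i\theta})\prod_{j\ge n+1}(1-S_je^{i\theta})\,\psi_n,\qquad \phi^*(\theta)=\sum_nC_ne^{-in\theta}\prod_{j\le n-1}(1-S_je^{i\theta})\prod_{j\ge n+1}(1+S_je^{-i\theta})\,\psi^*_n .$$ Then $$[\mathcal H,\phi(\theta)]=-(e^{i\theta}+e^{-i\theta})\phi(\theta),\qquad[\mathcal H,\phi^*(\theta)]=(e^{i\theta}+e^{-i\theta})\phi^*(\theta),$$ $$[\phi^*(\theta_1),\phi(\theta_2)]_+=\prod_j(1+S_je^{-i\theta_1})(1-S_je^{i\theta_1})\sum_{k\in\mathbb Z}e^{ik(\theta_1-\theta_2)}.$$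
   Context: The infinite sums are formal linear combinations of the $\psi_n,\psi^*_n$ (respectively of bilinears), and commutators and anticommutators are computed termwise using the anticommutation relations; the last identity is an identity of formal Fourier series in $\theta_1,\theta_2$. Products over $j$ are finite since $S_j=0$ for all but finitely many $j$. *)

theory Defs
  imports "HOL-Analysis.Analysis" "HOL-Library.Groups_Big_Fun"
begin

datatype gen = Psi int | PsiS int

text \<open>A formal (possibly infinite) linear combination of the generators,
  given by its coefficient function: X stands for the sum over g of X g times g.\<close>
type_synonym fsum = "gen \<Rightarrow> complex"

definition unit_fs :: "gen \<Rightarrow> fsum" where
  "unit_fs g = (\<lambda>h. if h = g then 1 else 0)"

text \<open>Canonical anticommutation relations: the anticommutator of two generators
  is the given scalar multiple of the identity.\<close>
fun acomm_gen :: "gen \<Rightarrow> gen \<Rightarrow> complex" where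
  "acomm_gen (PsiS m) (Psi n) = (if m = n then 1 else 0)"
| "acomm_gen (Psi n) (PsiS m) = (if m = n then 1 else 0)"
| "acomm_gen (Psi m) (Psi n) = 0"
| "acomm_gen (PsiS m) (PsiS n) = 0"

text \<open>Commutator of a bilinear g1 g2 with a generator h, computed with the CAR via
  the identity [g1 g2, h] = g1 [g2,h]_+ - [g1,h]_+ g2.\<close>
definition comm_quad_gen :: "gen \<Rightarrow> gen \<Rightarrow> gen \<Rightarrow> fsum" where
  "comm_quad_gen g1 g2 h =
     (\<lambda>x. acomm_gen g2 h * unit_fs g1 x - acomm_gen g1 h * unit_fs g2 x)"

definition comm_Hmn_gen :: "int \<Rightarrow> int \<Rightarrow> gen \<Rightarrow> fsum" where
  "comm_Hmn_gen m n h =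
     (\<lambda>x. comm_quad_gen (Psi n) (PsiS m) h x
          + (-1::complex) ^ nat (m - n + 1) * comm_quad_gen (Psi m) (PsiS n) h x)"

text \<open>Term of the termwise commutator [sum_{m>n} c m n H_mn, sum_h X h h],
  contributing to the coefficient of the generator g.\<close>
definition comm_H_term :: "(int \<Rightarrow> int \<Rightarrow> complex) \<Rightarrow> fsum \<Rightarrow> gen \<Rightarrow> (int \<times> int) \<times> gen \<Rightarrow> complex" where
  "comm_H_term c X g = (\<lambda>((m, n), h). if n < m then c m n * X h * comm_Hmn_gen m n h g else 0)"

definition comm_H_welldef :: "(int \<Rightarrow> int \<Rightarrow> complex) \<Rightarrow> fsum \<Rightarrow> bool" where
  "comm_H_welldef c X \<longleftrightarrow> (\<forall>g. finite {t. comm_H_term c X g t \<noteq> 0})"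

definition comm_H :: "(int \<Rightarrow> int \<Rightarrow> complex) \<Rightarrow> fsum \<Rightarrow> fsum" where
  "comm_H c X = (\<lambda>g. Sum_any (comm_H_term c X g))"

definition acomm_term :: "fsum \<Rightarrow> fsum \<Rightarrow> gen \<times> gen \<Rightarrow> complex" where
  "acomm_term X Y = (\<lambda>(g, h). X g * Y h * acomm_gen g h)"

definition acomm_welldef :: "fsum \<Rightarrow> fsum \<Rightarrow> bool" where
  "acomm_welldef X Y \<longleftrightarrow> finite {t. acomm_term X Y t \<noteq> 0}"

definition acomm_fs :: "fsum \<Rightarrow> fsum \<Rightarrow> complex" where
  "acomm_fs X Y = Sum_any (acomm_term X Y)"

definition fourier_coeff :: "(real \<Rightarrow> complex) \<Rightarrow> int \<Rightarrow> complex" where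
  "fourier_coeff f q =
     integral {0..2*pi} (\<lambda>t. f t * cis (- (of_int q * t))) / complex_of_real (2*pi)"

text \<open>Coefficient of H_mn in the Hamiltonian (used for m > n), with S_j = sinh(gamma j),
  C_j = cosh(gamma j).\<close>
definition Hcoef :: "(int \<Rightarrow> real) \<Rightarrow> int \<Rightarrow> int \<Rightarrow> complex" where
  "Hcoef \<gamma> m n = (-1::complex) ^ nat (m - n) *
     complex_of_real (cosh (\<gamma> m) * (\<Prod>j\<in>{n<..<m}. sinh (\<gamma> j)) * cosh (\<gamma> n))"

definition phi :: "(int \<Rightarrow> real) \<Rightarrow> real \<Rightarrow> fsum" where
  "phi \<gamma> \<theta> = (\<lambda>g. case g of
      Psi n \<Rightarrow> complex_of_real (cosh (\<gamma> n)) * cis (of_int n * \<theta>)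
        * Prod_any (\<lambda>j. if j \<le> n - 1 then 1 + complex_of_real (sinh (\<gamma> j)) * cis (- \<theta>) else 1)
        * Prod_any (\<lambda>j. if j \<ge> n + 1 then 1 - complex_of_real (sinh (\<gamma> j)) * cis \<theta> else 1)
    | PsiS n \<Rightarrow> 0)"

definition phis :: "(int \<Rightarrow> real) \<Rightarrow> real \<Rightarrow> fsum" where
  "phis \<gamma> \<theta> = (\<lambda>g. case g of
      Psi n \<Rightarrow> 0
    | PsiS n \<Rightarrow> complex_of_real (cosh (\<gamma> n)) * cis (- (of_int n * \<theta>))
        * Prod_any (\<lambda>j. if j \<le> n - 1 then 1 - complex_of_real (sinh (\<gamma> j)) * cis \<theta> else 1)
        * Prod_any (\<lambda>j. if j \<ge> n + 1 then 1 + complex_of_real (sinh (\<gamma> j)) * cis (- \<theta>) else 1))"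

end

theory Submission
  imports Defs
begin


lemma int_cis: 
  fixes k :: int
  shows "integral {0..2*pi} (\<lambda>t. cis (of_int k * t)) = (if k = 0 then complex_of_real (2*pi) else 0)"
proof (cases "k = 0")
  case True then show ?thesis by (simp add: scaleR_conv_of_real)
next
  case False
  define a where "a = \<i> * of_int k"
  have a: "a \<noteq> 0" using False by (simp add: a_def)
  have "\<And>t. t \<in> {0..2*pi} \<Longrightarrow> ((\<lambda>x. exp (a * x) / a) has_vector_derivative exp (a * t)) (at t within {0..2*pi})"
    using a
    by (intro derivative_eq_intros has_complex_derivative_imp_has_vector_derivative [unfolded o_def] | simp)+
  then have "((\<lambda>t. exp(a * of_real t)) has_integral exp(a * complex_of_real (2*pi))/a - exp(a * of_real 0)/a)  {0..2*pi}"
    by (meson fundamental_theorem_of_calculus pi_ge_zero mult_nonneg_nonneg zero_le_numeral)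
  moreover have "exp(a * complex_of_real (2*pi)) = 1"
  proof -
    have "exp(a * complex_of_real (2*pi)) = cis (2 * pi * of_int k)" by (simp add: a_def cis_conv_exp algebra_simps)
    also have "\<dots> = 1" by simp
    finally show ?thesis .
  qed
  moreover have "(\<lambda>t. exp(a * of_real t)) = (\<lambda>t. cis (of_int k * t))"
    by (simp add: a_def cis_conv_exp algebra_simps)
  ultimately show ?thesis using False by (simp add: integral_unique)
qed

definition trig :: "(real \<Rightarrow> complex) \<Rightarrow> int \<Rightarrow> int \<Rightarrow> bool" where
  "trig f lo hi \<longleftrightarrow> (\<exists>b. \<forall>t. f t = (\<Sum>k\<in>{lo..hi}. b k * cis (of_int k * t)))"

lemma trig_widen:
  assumes "trig f lo hi" "lo' \<le> lo" "hi \<le> hi'"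
  shows "trig f lo' hi'"
proof -
  obtain b where b: "\<And>t. f t = (\<Sum>k\<in>{lo..hi}. b k * cis (of_int k * t))" using assms(1) trig_def by auto
  define b' where "b' k = (if k \<in> {lo..hi} then b k else 0)" for k
  have "f t = (\<Sum>k\<in>{lo'..hi'}. b' k * cis (of_int k * t))" for t
    unfolding b by (rule sum.mono_neutral_cong_left) (use assms in \<open>auto simp: b'_def\<close>)
  then show ?thesis unfolding trig_def by blast
qed

lemma trig_cis: "trig (\<lambda>t. c * cis (of_int k * t)) k k"
  unfolding trig_def by (rule exI[of _ "\<lambda>_. c"]) simp

lemma trig_const: "trig (\<lambda>t. c) 0 0"
  using trig_cis[of c 0] by simp

lemma trig_add:
  assumes "trig f lo hi" "trig g lo hi"
  shows "trig (\<lambda>t. f t + g t) lo hi"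
proof -
  obtain b where b: "\<And>t. f t = (\<Sum>k\<in>{lo..hi}. b k * cis (of_int k * t))" using assms(1) trig_def by auto
  obtain c where c: "\<And>t. g t = (\<Sum>k\<in>{lo..hi}. c k * cis (of_int k * t))" using assms(2) trig_def by auto
  have "f t + g t = (\<Sum>k\<in>{lo..hi}. (b k + c k) * cis (of_int k * t))" for t
    unfolding b c by (simp add: sum.distrib distrib_right)
  then show ?thesis unfolding trig_def by (intro exI[of _ "\<lambda>k. b k + c k"]) auto
qed

lemma trig_scale:
  assumes "trig f lo hi"
  shows "trig (\<lambda>t. c * f t) lo hi"
proof -
  obtain b where b: "\<And>t. f t = (\<Sum>k\<in>{lo..hi}. b k * cis (of_int k * t))" using assms(1) trig_def by auto
  have "c * f t = (\<Sum>k\<in>{lo..hi}. (c * b k) * cis (of_int k * t))" for t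
    unfolding b by (simp add: sum_distrib_left mult.assoc)
  then show ?thesis unfolding trig_def by (intro exI[of _ "\<lambda>k. c * b k"]) auto
qed

lemma trig_diff:
  assumes "trig f lo hi" "trig g lo hi"
  shows "trig (\<lambda>t. f t - g t) lo hi"
  using trig_add[OF assms(1) trig_scale[OF assms(2), of "-1"]] by simp

lemma trig_zero: "trig (\<lambda>t. 0) lo hi"
  unfolding trig_def by (rule exI[of _ "\<lambda>_. 0"]) simp

lemma trig_sum:
  assumes "finite I" "\<And>i. i \<in> I \<Longrightarrow> trig (f i) lo hi"
  shows "trig (\<lambda>t. \<Sum>i\<in>I. f i t) lo hi"
  using assms by (induction I rule: finite_induct) (auto intro: trig_zero trig_add)

lemma trig_mult_cis:
  assumes "trig f lo hi"
  shows "trig (\<lambda>t. f t * cis (of_int m * t)) (lo + m) (hi + m)"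
proof -
  obtain b where b: "\<And>t. f t = (\<Sum>k\<in>{lo..hi}. b k * cis (of_int k * t))" using assms(1) trig_def by auto
  have "f t * cis (of_int m * t) = (\<Sum>k\<in>{lo+m..hi+m}. b (k - m) * cis (of_int k * t))" for t
    unfolding b sum_distrib_right
    by (rule sum.reindex_bij_witness[of _ "\<lambda>k. k - m" "\<lambda>k. k + m"])
       (auto simp: mult.assoc cis_mult algebra_simps)
  then show ?thesis unfolding trig_def by (intro exI[of _ "\<lambda>k. b (k - m)"]) auto
qed

lemma trig_mult:
  assumes "trig f l1 h1" "trig g l2 h2"
  shows "trig (\<lambda>t. f t * g t) (l1 + l2) (h1 + h2)"
proof -
  obtain c where c: "\<And>t. g t = (\<Sum>k\<in>{l2..h2}. c k * cis (of_int k * t))" using assms(2) trig_def by auto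
  have eq: "(\<lambda>t. f t * g t) = (\<lambda>t. \<Sum>k\<in>{l2..h2}. c k * (f t * cis (of_int k * t)))"
    unfolding c by (simp add: sum_distrib_left mult_ac)
  show ?thesis unfolding eq
    by (rule trig_sum) (auto intro!: trig_scale trig_widen[OF trig_mult_cis[OF assms(1)]])
qed

lemma trig_prod:
  assumes "finite D" "\<And>j. j \<in> D \<Longrightarrow> trig (f j) (-1) 1"
  shows "trig (\<lambda>t. \<Prod>j\<in>D. f j t) (- int (card D)) (int (card D))"
  using assms
proof (induction D rule: finite_induct)
  case empty then show ?case using trig_const[of 1] by simp
next
  case (insert x F)
  have "trig (\<lambda>t. f x t * (\<Prod>j\<in>F. f j t)) (-1 + - int (card F)) (1 + int (card F))"
    using insert by (intro trig_mult) auto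
  then show ?case using insert by simp
qed

lemma trig_cont: "trig f lo hi \<Longrightarrow> continuous_on S f"
proof -
  assume "trig f lo hi"
  then obtain b where b: "\<And>t. f t = (\<Sum>k\<in>{lo..hi}. b k * cis (of_int k * t))" using trig_def by auto
  have "f = (\<lambda>t. \<Sum>k\<in>{lo..hi}. b k * cis (of_int k * t))" using b by auto
  then show ?thesis by (simp add: continuous_on_cis continuous_intros)
qed

lemma trig_integrable: "trig f lo hi \<Longrightarrow> (\<lambda>t. f t * cis (- (of_int q * t))) integrable_on {0..2*pi}"
  by (intro integrable_continuous_interval continuous_intros continuous_on_cis trig_cont[of f lo hi]) auto

lemma fc_trig:
  assumes "\<And>t. f t = (\<Sum>k\<in>{lo..hi}. b k * cis (of_int k * t))"
  shows "fourier_coeff f q = (if q \<in> {lo..hi} then b q else 0)"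
proof -
  have cm: "cis (of_int k * t) * cis (- (of_int q * t)) = cis (of_int (k - q) * t)" for k t
    by (simp add: cis_mult algebra_simps)
  have "(\<lambda>t. f t * cis (- (of_int q * t))) = (\<lambda>t. \<Sum>k\<in>{lo..hi}. b k * cis (of_int (k - q) * t))"
    unfolding assms by (auto simp: sum_distrib_right mult.assoc cm)
  then have "integral {0..2*pi} (\<lambda>t. f t * cis (- (of_int q * t))) = (\<Sum>k\<in>{lo..hi}. b k * integral {0..2*pi} (\<lambda>t. cis (of_int (k - q) * t)))"
    by (simp add: integral_sum integrable_continuous_interval continuous_on_cis continuous_intros)
  also have "\<dots> = (\<Sum>k\<in>{lo..hi}. if k = q then b k * complex_of_real (2*pi) else 0)"
    by (rule sum.cong; simp only: int_cis; simp)
  also have "\<dots> = (if q \<in> {lo..hi} then b q * complex_of_real (2*pi) else 0)"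
    by (simp add: sum.delta')
  finally show ?thesis unfolding fourier_coeff_def by auto
qed

lemma fc_zero: "trig f lo hi \<Longrightarrow> q < lo \<or> hi < q \<Longrightarrow> fourier_coeff f q = 0"
proof -
  assume "trig f lo hi" "q < lo \<or> hi < q"
  then obtain b where b: "\<And>t. f t = (\<Sum>k\<in>{lo..hi}. b k * cis (of_int k * t))" using trig_def by auto
  show ?thesis using fc_trig[OF b, of q] \<open>q < lo \<or> hi < q\<close> by auto
qed

lemma trig_eval:
  assumes "trig f lo hi"
  shows "f t = (\<Sum>k\<in>{lo..hi}. fourier_coeff f k * cis (of_int k * t))"
proof -
  obtain b where b: "\<And>t. f t = (\<Sum>k\<in>{lo..hi}. b k * cis (of_int k * t))" using assms(1) trig_def by auto
  show ?thesis unfolding b[of t] by (rule sum.cong) (auto simp: fc_trig[OF b])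
qed

lemma fc_add: "trig f lo hi \<Longrightarrow> trig g lo' hi' \<Longrightarrow>
  fourier_coeff (\<lambda>t. f t + g t) q = fourier_coeff f q + fourier_coeff g q"
  unfolding fourier_coeff_def
  by (simp add: distrib_right integral_add trig_integrable add_divide_distrib)

lemma fc_diff: "trig f lo hi \<Longrightarrow> trig g lo' hi' \<Longrightarrow>
  fourier_coeff (\<lambda>t. f t - g t) q = fourier_coeff f q - fourier_coeff g q"
  unfolding fourier_coeff_def
  by (simp add: left_diff_distrib integral_diff trig_integrable diff_divide_distrib)

lemma fc_scale: "fourier_coeff (\<lambda>t. c * f t) q = c * fourier_coeff f q"
  unfolding fourier_coeff_def by (simp add: mult.assoc)

lemma fc_sum: "finite I \<Longrightarrow> (\<And>i. i \<in> I \<Longrightarrow> trig (f i) lo hi) \<Longrightarrow>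
  fourier_coeff (\<lambda>t. \<Sum>i\<in>I. f i t) q = (\<Sum>i\<in>I. fourier_coeff (f i) q)"
proof (induction I rule: finite_induct)
  case empty then show ?case by (simp add: fourier_coeff_def)
next
  case (insert x F)
  have "fourier_coeff (\<lambda>t. f x t + (\<Sum>i\<in>F. f i t)) q = fourier_coeff (f x) q + fourier_coeff (\<lambda>t. \<Sum>i\<in>F. f i t) q"
    by (rule fc_add[of _ lo hi _ lo hi]) (use insert in \<open>auto intro: trig_sum\<close>)
  then show ?case using insert by simp
qed

lemma fc_shift: "fourier_coeff (\<lambda>t. cis t * f t) q = fourier_coeff f (q - 1)"
  unfolding fourier_coeff_def
  by (rule arg_cong2[where f="(/)"], rule arg_cong[where f="integral _"]) 
     (auto simp: mult_ac cis_mult algebra_simps)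



lemma prod_pick:
  assumes "finite D" "m \<in> D \<or> f m = 1"
  shows "prod f D = f m * prod f (D - {m})"
  using assms by (cases "m \<in> D") (auto simp: prod.remove)

lemma tele_int:
  fixes f :: "int \<Rightarrow> 'a::ab_group_add"
  assumes "lo \<le> hi + 1"
  shows "(\<Sum>k\<in>{lo..hi}. f k - f (k - 1)) = f hi - f (lo - 1)"
proof -
  have "lo - 1 \<le> hi" using assms by simp
  then show ?thesis
  proof (induction hi rule: int_ge_induct)
    case base then show ?case by simp
  next
    case (step i)
    have "{lo..i+1} = insert (i+1) {lo..i}" using step by auto
    then show ?case using step by simp
  qed
qed

lemma tele_int_up:
  fixes F :: "int \<Rightarrow> 'a::ab_group_add"
  assumes "lo \<le> hi + 1"
  shows "(\<Sum>k\<in>{lo..hi}. F k - F (k + 1)) = F lo - F (hi + 1)"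
  using tele_int[OF assms, of "\<lambda>k. - F (k + 1)"] by simp

definition Rf :: "(int \<Rightarrow> complex) \<Rightarrow> complex \<Rightarrow> int set \<Rightarrow> (int \<Rightarrow> complex) \<Rightarrow> complex \<Rightarrow> complex \<Rightarrow> int \<Rightarrow> complex" where
  "Rf s \<sigma> D e z zi n = e n * (\<Prod>j\<in>D. if j < n then 1 + \<sigma> * s j * zi else 1)
      * (\<Prod>j\<in>D. if n < j then 1 - \<sigma> * s j * z else 1)"

definition Qf :: "(int \<Rightarrow> complex) \<Rightarrow> complex \<Rightarrow> int set \<Rightarrow> (int \<Rightarrow> complex) \<Rightarrow> complex \<Rightarrow> complex \<Rightarrow> int \<Rightarrow> complex" where
  "Qf s \<sigma> D e z zi n = e n * (\<Prod>j\<in>D. if j < n then 1 + \<sigma> * s j * zi else 1 - \<sigma> * s j * z)"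

locale alg =
  fixes s c :: "int \<Rightarrow> complex" and D :: "int set" and e :: "int \<Rightarrow> complex" and z zi \<sigma> :: complex
  assumes D: "finite D" and sD: "\<And>j. j \<notin> D \<Longrightarrow> s j = 0"
    and cs: "\<And>j. c j ^ 2 = 1 + s j ^ 2"
    and zz: "z * zi = 1" and e: "\<And>n. e (n+1) = z * e n" and sg: "\<sigma> * \<sigma> = 1"
begin

abbreviation "R \<equiv> Rf s \<sigma> D e z zi"
abbreviation "Q \<equiv> Qf s \<sigma> D e z zi"

definition P where "P n = (\<Prod>j\<in>D-{n}. (if j < n then 1 + \<sigma> * s j * zi else 1) * (if n < j then 1 - \<sigma> * s j * z else 1))"

lemma R_pick: "R n = e n * P n"
proof -
  have "R n = e n * (\<Prod>j\<in>D. (if j < n then 1 + \<sigma> * s j * zi else 1) * (if n < j then 1 - \<sigma> * s j * z else 1))"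
    unfolding Rf_def by (simp add: prod.distrib mult.assoc)
  also have "\<dots> = e n * (\<Prod>j\<in>D-{n}. (if j < n then 1 + \<sigma> * s j * zi else 1) * (if n < j then 1 - \<sigma> * s j * z else 1))"
    by (subst prod_pick[OF D, of n]) auto
  finally show ?thesis unfolding P_def .
qed

lemma QR1: "Q (n+1) = R n * (z + \<sigma> * s n)"
proof -
  have "Q (n+1) = e (n+1) * ((1 + \<sigma> * s n * zi) * (\<Prod>j\<in>D-{n}. if j < n+1 then 1 + \<sigma> * s j * zi else 1 - \<sigma> * s j * z))"
    unfolding Qf_def by (subst prod_pick[OF D, of n]) (use sD in auto)
  also have "(\<Prod>j\<in>D-{n}. if j < n+1 then 1 + \<sigma> * s j * zi else 1 - \<sigma> * s j * z)
     = (\<Prod>j\<in>D-{n}. (if j < n then 1 + \<sigma> * s j * zi else 1) * (if n < j then 1 - \<sigma> * s j * z else 1))"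
    by (rule prod.cong) auto
  finally have "Q (n+1) = z * e n * ((1 + \<sigma> * s n * zi) * P n)" unfolding P_def e .
  then show ?thesis unfolding R_pick using zz by algebra
qed

lemma QR2: "Q n = R n * (1 - \<sigma> * s n * z)"
proof -
  have "Q n = e n * ((1 - \<sigma> * s n * z) * (\<Prod>j\<in>D-{n}. if j < n then 1 + \<sigma> * s j * zi else 1 - \<sigma> * s j * z))"
    unfolding Qf_def by (subst prod_pick[OF D, of n]) (use sD in auto)
  also have "(\<Prod>j\<in>D-{n}. if j < n then 1 + \<sigma> * s j * zi else 1 - \<sigma> * s j * z)
     = (\<Prod>j\<in>D-{n}. (if j < n then 1 + \<sigma> * s j * zi else 1) * (if n < j then 1 - \<sigma> * s j * z else 1))"
    by (rule prod.cong) auto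
  finally show ?thesis unfolding R_pick P_def by (simp only: mult_ac)
qed

lemma up_rel: "Q n + \<sigma> * s n * Q (n+1) = c n ^ 2 * R n"
proof -
  have "Q n + \<sigma> * s n * Q (n+1) = R n * (1 + (\<sigma> * \<sigma>) * s n ^ 2)"
    unfolding QR1[of n] QR2[of n] by (simp add: algebra_simps power2_eq_square)
  then show ?thesis by (simp add: sg cs)
qed

lemma low_rel: "zi * (Q (n+1) - \<sigma> * s n * Q n) = c n ^ 2 * R n"
proof -
  have "zi * (Q (n+1) - \<sigma> * s n * Q n) = R n * ((z * zi) + (\<sigma> * \<sigma>) * (z * zi) * s n ^ 2)"
    unfolding QR1[of n] QR2[of n] by (simp add: algebra_simps power2_eq_square)
  then show ?thesis by (simp add: sg cs zz)
qed

lemma upper_sum: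
  assumes M: "a < M" "s M = 0"
  shows "(\<Sum>m\<in>{a<..M}. (-\<sigma>)^nat(m-a) * (\<Prod>j\<in>{a<..<m}. s j) * (c m ^ 2 * R m)) = - \<sigma> * Q (a+1)"
proof -
  define F where "F m = (-\<sigma>)^nat(m-a) * (\<Prod>j\<in>{a<..<m}. s j) * Q m" for m
  have "(\<Sum>m\<in>{a<..M}. (-\<sigma>)^nat(m-a) * (\<Prod>j\<in>{a<..<m}. s j) * (c m ^ 2 * R m))
      = (\<Sum>m\<in>{a+1..M}. F m - F (m+1))"
  proof (rule sum.cong)
    show "{a<..M} = {a+1..M}" by auto
  next
    fix m assume m: "m \<in> {a+1..M}"
    have n: "nat (m + 1 - a) = Suc (nat (m - a))" using m by auto
    have p: "{a<..<m+1} = insert m {a<..<m}" using m by auto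
    show "(-\<sigma>)^nat(m-a) * (\<Prod>j\<in>{a<..<m}. s j) * (c m ^ 2 * R m) = F m - F (m+1)"
      unfolding F_def n p up_rel[symmetric] by (simp add: algebra_simps)
  qed
  also have "\<dots> = F (a+1) - F (M+1)"
    by (rule tele_int_up) (use M in auto)
  also have "F (M+1) = 0"
  proof -
    have "M \<in> {a<..<M+1}" using M by auto
    then have "(\<Prod>j\<in>{a<..<M+1}. s j) = 0" using M by (intro prod_zero) auto
    then show ?thesis by (simp add: F_def)
  qed
  also have "F (a+1) = - \<sigma> * Q (a+1)"
  proof -
    have "{a<..<a+1} = {}" by auto
    then show ?thesis by (simp add: F_def)
  qed
  finally show ?thesis by simp
qed

lemma lower_sum:
  assumes N: "N < a" "s N = 0"
  shows "(\<Sum>n\<in>{N..<a}. \<sigma>^nat(a-n) * (\<Prod>j\<in>{n<..<a}. s j) * (c n ^ 2 * R n)) = \<sigma> * zi * Q a"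
proof -
  define G where "G n = \<sigma>^nat(a-n) * (\<Prod>j\<in>{n<..<a}. s j) * zi * Q (n+1)" for n
  have "(\<Sum>n\<in>{N..<a}. \<sigma>^nat(a-n) * (\<Prod>j\<in>{n<..<a}. s j) * (c n ^ 2 * R n))
      = (\<Sum>n\<in>{N..a-1}. G n - G (n - 1))"
  proof (rule sum.cong)
    show "{N..<a} = {N..a-1}" by auto
  next
    fix n assume n: "n \<in> {N..a-1}"
    have nn: "nat (a - (n - 1)) = Suc (nat (a - n))" using n by auto
    have p: "{n-1<..<a} = insert n {n<..<a}" using n by auto
    show "\<sigma>^nat(a-n) * (\<Prod>j\<in>{n<..<a}. s j) * (c n ^ 2 * R n) = G n - G (n - 1)"
      unfolding G_def nn p low_rel[symmetric] by (simp add: algebra_simps)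
  qed
  also have "\<dots> = G (a-1) - G (N-1)"
    by (rule tele_int) (use N in auto)
  also have "G (N-1) = 0"
  proof -
    have "N \<in> {N-1<..<a}" using N by auto
    then have "(\<Prod>j\<in>{N-1<..<a}. s j) = 0" using N by (intro prod_zero) auto
    then show ?thesis by (simp add: G_def)
  qed
  also have "G (a-1) = \<sigma> * zi * Q a"
  proof -
    have "{a-1<..<a} = {}" by auto
    then show ?thesis by (simp add: G_def)
  qed
  finally show ?thesis by simp
qed

end


lemma SA:
  fixes h :: "'a \<Rightarrow> complex"
  assumes "finite A" "inj_on g A" "\<And>t. h t \<noteq> 0 \<Longrightarrow> t \<in> g ` A"
  shows "Sum_any h = (\<Sum>x\<in>A. h (g x))" "finite {t. h t \<noteq> 0}"
proof -
  have sub: "{t. h t \<noteq> 0} \<subseteq> g ` A" using assms(3) by auto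
  show "Sum_any h = (\<Sum>x\<in>A. h (g x))"
    using Sum_any.expand_superset[OF finite_imageI[OF assms(1)] sub] sum.reindex[OF assms(2)] by simp
  show "finite {t. h t \<noteq> 0}" using sub assms(1) finite_subset by blast
qed

lemma term_phi:
  assumes "\<And>k. X (PsiS k) = 0"
  shows "comm_H_term cc X (Psi a) ((m,n),h) =
    (if n = a \<and> a < m \<and> h = Psi m then cc m a * X (Psi m) else 0) +
    (if m = a \<and> n < a \<and> h = Psi n then cc a n * X (Psi n) * (-1)^nat(a-n+1) else 0)"
  by (cases h) (auto simp: comm_H_term_def comm_Hmn_gen_def comm_quad_gen_def unit_fs_def assms)

lemma term_phi0:
  assumes "\<And>k. X (PsiS k) = 0"
  shows "comm_H_term cc X (PsiS a) t = 0"
  by (cases t; cases "snd t") (auto simp: comm_H_term_def comm_Hmn_gen_def comm_quad_gen_def unit_fs_def assms)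

lemma term_phis:
  assumes "\<And>k. X (Psi k) = 0"
  shows "comm_H_term cc X (PsiS a) ((m,n),h) =
    (if m = a \<and> n < a \<and> h = PsiS n then - cc a n * X (PsiS n) else 0) +
    (if n = a \<and> a < m \<and> h = PsiS m then - cc m a * X (PsiS m) * (-1)^nat(m-a+1) else 0)"
  by (cases h) (auto simp: comm_H_term_def comm_Hmn_gen_def comm_quad_gen_def unit_fs_def assms)

lemma term_phis0:
  assumes "\<And>k. X (Psi k) = 0"
  shows "comm_H_term cc X (Psi a) t = 0"
  by (cases t; cases "snd t") (auto simp: comm_H_term_def comm_Hmn_gen_def comm_quad_gen_def unit_fs_def assms)

lemma Hcoef_zero: "j \<in> {n<..<m} \<Longrightarrow> \<gamma> j = 0 \<Longrightarrow> Hcoef \<gamma> m n = 0"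
  unfolding Hcoef_def by (subst prod_zero[of "{n<..<m}"]) auto

lemma Hcoef_eq: "Hcoef \<gamma> m n = (-1)^nat(m-n) * complex_of_real (cosh (\<gamma> m)) *
   (\<Prod>j\<in>{n<..<m}. complex_of_real (sinh (\<gamma> j))) * complex_of_real (cosh (\<gamma> n))"
  unfolding Hcoef_def by (simp add: of_real_prod mult.assoc)

lemma phi_conv:
  assumes fin: "finite {n. \<gamma> n \<noteq> 0}"
  shows "phi \<gamma> \<theta> (Psi n) = complex_of_real (cosh (\<gamma> n)) *
     Rf (\<lambda>j. complex_of_real (sinh (\<gamma> j))) 1 {n. \<gamma> n \<noteq> 0} (\<lambda>n. cis (of_int n * \<theta>)) (cis \<theta>) (cis (-\<theta>)) n"
proof -
  let ?D = "{n. \<gamma> n \<noteq> 0}"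
  have 1: "Prod_any (\<lambda>j. if j \<le> n - 1 then 1 + complex_of_real (sinh (\<gamma> j)) * cis (- \<theta>) else 1)
     = (\<Prod>j\<in>?D. if j < n then 1 + 1 * complex_of_real (sinh (\<gamma> j)) * cis (- \<theta>) else 1)"
    by (subst Prod_any.expand_superset[OF fin]) (auto intro!: prod.cong)
  have 2: "Prod_any (\<lambda>j. if j \<ge> n + 1 then 1 - complex_of_real (sinh (\<gamma> j)) * cis \<theta> else 1)
     = (\<Prod>j\<in>?D. if n < j then 1 - 1 * complex_of_real (sinh (\<gamma> j)) * cis \<theta> else 1)"
    by (subst Prod_any.expand_superset[OF fin]) (auto intro!: prod.cong)
  show ?thesis unfolding phi_def Rf_def gen.case 1 2 by (simp only: mult_ac)
qed

lemma phis_conv: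
  assumes fin: "finite {n. \<gamma> n \<noteq> 0}"
  shows "phis \<gamma> \<theta> (PsiS n) = complex_of_real (cosh (\<gamma> n)) *
     Rf (\<lambda>j. complex_of_real (sinh (\<gamma> j))) (-1) {n. \<gamma> n \<noteq> 0} (\<lambda>n. cis (- (of_int n * \<theta>))) (cis (-\<theta>)) (cis \<theta>) n"
proof -
  let ?D = "{n. \<gamma> n \<noteq> 0}"
  have 1: "Prod_any (\<lambda>j. if j \<le> n - 1 then 1 - complex_of_real (sinh (\<gamma> j)) * cis \<theta> else 1)
     = (\<Prod>j\<in>?D. if j < n then 1 + (-1) * complex_of_real (sinh (\<gamma> j)) * cis \<theta> else 1)"
    by (subst Prod_any.expand_superset[OF fin]) (auto intro!: prod.cong)
  have 2: "Prod_any (\<lambda>j. if j \<ge> n + 1 then 1 + complex_of_real (sinh (\<gamma> j)) * cis (-\<theta>) else 1)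
     = (\<Prod>j\<in>?D. if n < j then 1 - (-1) * complex_of_real (sinh (\<gamma> j)) * cis (-\<theta>) else 1)"
    by (subst Prod_any.expand_superset[OF fin]) (auto intro!: prod.cong)
  show ?thesis unfolding phis_def Rf_def gen.case 1 2 by (simp only: mult_ac)
qed



lemma bounds_exist:
  assumes "finite D"
  obtains M N :: int where "a < M" "M \<notin> D" "N < a" "N \<notin> D"
proof -
  define M where "M = Max (insert a D) + 1"
  define N where "N = Min (insert a D) - 1"
  have "a < M" using assms Max_ge[of "insert a D" a] unfolding M_def by simp
  moreover have "M \<notin> D"
  proof
    assume "M \<in> D" then have "M \<le> Max (insert a D)" using assms by simp
    then show False by (simp add: M_def)
  qed
  moreover have "N < a"
  proof -
    have "Min (insert a D) \<le> a" using assms by simp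
    then show ?thesis unfolding N_def by simp
  qed
  moreover have "N \<notin> D"
  proof
    assume "N \<in> D" then have "Min (insert a D) \<le> N" using assms by simp
    then show False by (simp add: N_def)
  qed
  ultimately show ?thesis using that by blast
qed

lemma part1:
  fixes \<gamma> :: "int \<Rightarrow> real" and \<theta> :: real
  assumes fin: "finite {n. \<gamma> n \<noteq> 0}"
  shows "comm_H_welldef (Hcoef \<gamma>) (phi \<gamma> \<theta>) \<and>
         comm_H (Hcoef \<gamma>) (phi \<gamma> \<theta>) = (\<lambda>g. - (cis \<theta> + cis (- \<theta>)) * phi \<gamma> \<theta> g)"
proof -
  define D where "D = {n. \<gamma> n \<noteq> 0}"
  define s where "s j = complex_of_real (sinh (\<gamma> j))" for j
  define c where "c j = complex_of_real (cosh (\<gamma> j))" for j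
  define e where "e n = cis (of_int n * \<theta>)" for n :: int
  have X0: "\<And>k. phi \<gamma> \<theta> (PsiS k) = 0" by (simp add: phi_def)
  interpret A: alg s c D e "cis \<theta>" "cis (-\<theta>)" 1
  proof
    show "finite D" using fin D_def by simp
    show "\<And>j. j \<notin> D \<Longrightarrow> s j = 0" by (simp add: D_def s_def)
    show "\<And>j. c j ^ 2 = 1 + s j ^ 2" unfolding c_def s_def
      by (metis cosh_square_eq add.commute of_real_add of_real_power of_real_1)
    show "cis \<theta> * cis (- \<theta>) = 1" by (simp add: cis_mult)
    show "\<And>n. e (n + 1) = cis \<theta> * e n" by (simp add: e_def cis_mult algebra_simps)
    show "(1::complex) * 1 = 1" by simp
  qed
  have phiR: "phi \<gamma> \<theta> (Psi n) = c n * A.R n" for n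
    using phi_conv[OF fin] unfolding D_def s_def c_def e_def by simp
  have H: "Hcoef \<gamma> m n = (-1)^nat(m-n) * c m * (\<Prod>j\<in>{n<..<m}. s j) * c n" for m n
    unfolding Hcoef_eq c_def s_def ..
  have main: "finite {t. comm_H_term (Hcoef \<gamma>) (phi \<gamma> \<theta>) g t \<noteq> 0}
       \<and> comm_H (Hcoef \<gamma>) (phi \<gamma> \<theta>) g = - (cis \<theta> + cis (- \<theta>)) * phi \<gamma> \<theta> g" for g
    proof (cases g)
      case (PsiS a)
      then show ?thesis using term_phi0[of "phi \<gamma> \<theta>", OF X0] by (simp add: comm_H_def X0)
    next
      case (Psi a)
      obtain M N where MN: "a < M" "M \<notin> D" "N < a" "N \<notin> D" using bounds_exist[OF A.D] by blast
      define f1 where "f1 t = (case t of ((m,n),h) \<Rightarrow> if n = a \<and> a < m \<and> h = Psi m then Hcoef \<gamma> m a * phi \<gamma> \<theta> (Psi m) else 0)" for t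
      define f2 where "f2 t = (case t of ((m,n),h) \<Rightarrow> if m = a \<and> n < a \<and> h = Psi n then Hcoef \<gamma> a n * phi \<gamma> \<theta> (Psi n) * (-1)^nat(a-n+1) else 0)" for t
      have split: "comm_H_term (Hcoef \<gamma>) (phi \<gamma> \<theta>) (Psi a) t = f1 t + f2 t" for t
        by (cases t) (auto simp: f1_def f2_def term_phi[of "phi \<gamma> \<theta>", OF X0])
      have S1: "Sum_any f1 = (\<Sum>m\<in>{a<..M}. f1 ((m,a),Psi m))" "finite {t. f1 t \<noteq> 0}"
      proof -
        have "t \<in> (\<lambda>m. ((m,a),Psi m)) ` {a<..M}" if "f1 t \<noteq> 0" for t
        proof -
          obtain m n h where t: "t = ((m,n),h)" by (metis prod.collapse)
          have *: "n = a" "a < m" "h = Psi m" "Hcoef \<gamma> m a \<noteq> 0" using that unfolding t f1_def by (auto split: if_splits)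
          have "m \<le> M"
          proof (rule ccontr)
            assume "\<not> m \<le> M"
            then have "Hcoef \<gamma> m a = 0" using MN by (intro Hcoef_zero[of M]) (auto simp: D_def)
            with * show False by simp
          qed
          then show ?thesis using * t by auto
        qed
        then show "Sum_any f1 = (\<Sum>m\<in>{a<..M}. f1 ((m,a),Psi m))" "finite {t. f1 t \<noteq> 0}"
          by (rule SA[rotated 2]; auto simp: inj_on_def)+
      qed
      have S2: "Sum_any f2 = (\<Sum>n\<in>{N..<a}. f2 ((a,n),Psi n))" "finite {t. f2 t \<noteq> 0}"
      proof -
        have "t \<in> (\<lambda>n. ((a,n),Psi n)) ` {N..<a}" if "f2 t \<noteq> 0" for t
        proof -
          obtain m n h where t: "t = ((m,n),h)" by (metis prod.collapse)
          have *: "m = a" "n < a" "h = Psi n" "Hcoef \<gamma> a n \<noteq> 0" using that unfolding t f2_def by (auto split: if_splits)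
          have "N \<le> n"
          proof (rule ccontr)
            assume "\<not> N \<le> n"
            then have "Hcoef \<gamma> a n = 0" using MN by (intro Hcoef_zero[of N]) (auto simp: D_def)
            with * show False by simp
          qed
          then show ?thesis using * t by auto
        qed
        then show "Sum_any f2 = (\<Sum>n\<in>{N..<a}. f2 ((a,n),Psi n))" "finite {t. f2 t \<noteq> 0}"
          by (rule SA[rotated 2]; auto simp: inj_on_def)+
      qed
      have fin12: "finite {t. comm_H_term (Hcoef \<gamma>) (phi \<gamma> \<theta>) (Psi a) t \<noteq> 0}"
        by (rule finite_subset[OF _ finite_UnI[OF S1(2) S2(2)]]) (auto simp: split)
      have "comm_H (Hcoef \<gamma>) (phi \<gamma> \<theta>) (Psi a) = Sum_any f1 + Sum_any f2"
        unfolding comm_H_def split using Sum_any.distrib[OF S1(2) S2(2)] by simp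
      also have "Sum_any f1 = c a * (\<Sum>m\<in>{a<..M}. (-1)^nat(m-a) * (\<Prod>j\<in>{a<..<m}. s j) * (c m ^ 2 * A.R m))"
        unfolding S1(1) sum_distrib_left
        by (rule sum.cong) (simp_all add: f1_def H phiR power2_eq_square mult_ac)
      also have "\<dots> = c a * (- 1 * A.Q (a+1))"
        using A.upper_sum[of a M] MN by (simp add: D_def s_def)
      also have "Sum_any f2 = - c a * (\<Sum>n\<in>{N..<a}. 1^nat(a-n) * (\<Prod>j\<in>{n<..<a}. s j) * (c n ^ 2 * A.R n))"
        unfolding S2(1) sum_distrib_left
      proof (rule sum.cong)
        fix n assume n: "n \<in> {N..<a}"
        have "nat (a - n + 1) = Suc (nat (a - n))" using n by auto
        then have "(-1::complex)^nat(a-n) * (-1)^nat(a-n+1) = - 1"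
          by (simp add: power_add[symmetric] power_Suc mult_2[symmetric] power_mult)
        then have sg: "(-1::complex)^nat(a-n) * (-1)^nat(a-n+1) = - 1" .
        have "f2 ((a, n), Psi n) = ((-1::complex)^nat(a-n) * (-1)^nat(a-n+1)) * (c a * (prod s {n<..<a} * (c n * c n * A.R n)))"
          using n by (simp add: f2_def H phiR mult_ac)
        then show "f2 ((a, n), Psi n) = - c a * (1 ^ nat (a - n) * prod s {n<..<a} * (c n ^ 2 * A.R n))"
          unfolding sg by (simp add: power2_eq_square)
      qed simp
      also have "\<dots> = - c a * (1 * cis (-\<theta>) * A.Q a)"
        using A.lower_sum[of N a] MN by (simp add: D_def s_def)
      also have "c a * (- 1 * A.Q (a+1)) + - c a * (1 * cis (-\<theta>) * A.Q a) = - (cis \<theta> + cis (- \<theta>)) * (c a * A.R a)"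
      proof -
        have zz: "cis \<theta> * cis (-\<theta>) = 1" by (simp add: cis_mult)
        show ?thesis unfolding A.QR1[of a] A.QR2[of a] using zz by algebra
      qed
      finally show ?thesis using fin12 Psi phiR by simp
    qed
  then show ?thesis unfolding comm_H_welldef_def by auto
qed

lemma aux2:
  fixes z zi c R s x :: complex
  assumes "z * zi = 1"
  shows "- c * (-1 * zi * (R * (1 - (-1) * s * z))) + c * (- (-1) * (R * (z + (-1) * s))) = (zi + z) * (c * R)"
proof -
  have "- c * (-1 * zi * (R * (1 - (-1) * s * z))) + c * (- (-1) * (R * (z + (-1) * s)))
     = c * R * (zi + s * (z * zi) + z - s)" by (simp add: algebra_simps)
  then show ?thesis using assms by (simp add: algebra_simps)
qed

lemma part2:
  fixes \<gamma> :: "int \<Rightarrow> real" and \<theta> :: real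
  assumes fin: "finite {n. \<gamma> n \<noteq> 0}"
  shows "comm_H_welldef (Hcoef \<gamma>) (phis \<gamma> \<theta>) \<and>
         comm_H (Hcoef \<gamma>) (phis \<gamma> \<theta>) = (\<lambda>g. (cis \<theta> + cis (- \<theta>)) * phis \<gamma> \<theta> g)"
proof -
  define D where "D = {n. \<gamma> n \<noteq> 0}"
  define s where "s j = complex_of_real (sinh (\<gamma> j))" for j
  define c where "c j = complex_of_real (cosh (\<gamma> j))" for j
  define e where "e n = cis (- (of_int n * \<theta>))" for n :: int
  have X0: "\<And>k. phis \<gamma> \<theta> (Psi k) = 0" by (simp add: phis_def)
  interpret A: alg s c D e "cis (-\<theta>)" "cis \<theta>" "-1"
  proof
    show "finite D" using fin D_def by simp
    show "\<And>j. j \<notin> D \<Longrightarrow> s j = 0" by (simp add: D_def s_def)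
    show "\<And>j. c j ^ 2 = 1 + s j ^ 2" unfolding c_def s_def
      by (metis cosh_square_eq add.commute of_real_add of_real_power of_real_1)
    show "cis (-\<theta>) * cis \<theta> = 1" by (simp add: cis_mult)
    show "\<And>n. e (n + 1) = cis (-\<theta>) * e n" by (simp add: e_def cis_mult algebra_simps)
    show "(-1::complex) * -1 = 1" by simp
  qed
  have phiR: "phis \<gamma> \<theta> (PsiS n) = c n * A.R n" for n
    using phis_conv[OF fin] unfolding D_def s_def c_def e_def by simp
  have H: "Hcoef \<gamma> m n = (-1)^nat(m-n) * c m * (\<Prod>j\<in>{n<..<m}. s j) * c n" for m n
    unfolding Hcoef_eq c_def s_def ..
  have main: "finite {t. comm_H_term (Hcoef \<gamma>) (phis \<gamma> \<theta>) g t \<noteq> 0}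
       \<and> comm_H (Hcoef \<gamma>) (phis \<gamma> \<theta>) g = (cis \<theta> + cis (- \<theta>)) * phis \<gamma> \<theta> g" for g
    proof (cases g)
      case (Psi a)
      then show ?thesis using term_phis0[of "phis \<gamma> \<theta>", OF X0] by (simp add: comm_H_def X0)
    next
      case (PsiS a)
      obtain M N where MN: "a < M" "M \<notin> D" "N < a" "N \<notin> D" using bounds_exist[OF A.D] by blast
      define f1 where "f1 t = (case t of ((m,n),h) \<Rightarrow> if m = a \<and> n < a \<and> h = PsiS n then - Hcoef \<gamma> a n * phis \<gamma> \<theta> (PsiS n) else 0)" for t
      define f2 where "f2 t = (case t of ((m,n),h) \<Rightarrow> if n = a \<and> a < m \<and> h = PsiS m then - Hcoef \<gamma> m a * phis \<gamma> \<theta> (PsiS m) * (-1)^nat(m-a+1) else 0)" for t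
      have split: "comm_H_term (Hcoef \<gamma>) (phis \<gamma> \<theta>) (PsiS a) t = f1 t + f2 t" for t
        by (cases t) (auto simp: f1_def f2_def term_phis[of "phis \<gamma> \<theta>", OF X0])
      have S2: "Sum_any f2 = (\<Sum>m\<in>{a<..M}. f2 ((m,a),PsiS m))" "finite {t. f2 t \<noteq> 0}"
      proof -
        have "t \<in> (\<lambda>m. ((m,a),PsiS m)) ` {a<..M}" if "f2 t \<noteq> 0" for t
        proof -
          obtain m n h where t: "t = ((m,n),h)" by (metis prod.collapse)
          have *: "n = a" "a < m" "h = PsiS m" "Hcoef \<gamma> m a \<noteq> 0" using that unfolding t f2_def by (auto split: if_splits)
          have "m \<le> M"
          proof (rule ccontr)
            assume "\<not> m \<le> M"
            then have "Hcoef \<gamma> m a = 0" using MN by (intro Hcoef_zero[of M]) (auto simp: D_def)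
            with * show False by simp
          qed
          then show ?thesis using * t by auto
        qed
        then show "Sum_any f2 = (\<Sum>m\<in>{a<..M}. f2 ((m,a),PsiS m))" "finite {t. f2 t \<noteq> 0}"
          by (rule SA[rotated 2]; auto simp: inj_on_def)+
      qed
      have S1: "Sum_any f1 = (\<Sum>n\<in>{N..<a}. f1 ((a,n),PsiS n))" "finite {t. f1 t \<noteq> 0}"
      proof -
        have "t \<in> (\<lambda>n. ((a,n),PsiS n)) ` {N..<a}" if "f1 t \<noteq> 0" for t
        proof -
          obtain m n h where t: "t = ((m,n),h)" by (metis prod.collapse)
          have *: "m = a" "n < a" "h = PsiS n" "Hcoef \<gamma> a n \<noteq> 0" using that unfolding t f1_def by (auto split: if_splits)
          have "N \<le> n"
          proof (rule ccontr)
            assume "\<not> N \<le> n"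
            then have "Hcoef \<gamma> a n = 0" using MN by (intro Hcoef_zero[of N]) (auto simp: D_def)
            with * show False by simp
          qed
          then show ?thesis using * t by auto
        qed
        then show "Sum_any f1 = (\<Sum>n\<in>{N..<a}. f1 ((a,n),PsiS n))" "finite {t. f1 t \<noteq> 0}"
          by (rule SA[rotated 2]; auto simp: inj_on_def)+
      qed
      have fin12: "finite {t. comm_H_term (Hcoef \<gamma>) (phis \<gamma> \<theta>) (PsiS a) t \<noteq> 0}"
        by (rule finite_subset[OF _ finite_UnI[OF S1(2) S2(2)]]) (auto simp: split)
      have "comm_H (Hcoef \<gamma>) (phis \<gamma> \<theta>) (PsiS a) = Sum_any f1 + Sum_any f2"
        unfolding comm_H_def split using Sum_any.distrib[OF S1(2) S2(2)] by simp
      also have "Sum_any f1 = - c a * (\<Sum>n\<in>{N..<a}. (-1)^nat(a-n) * (\<Prod>j\<in>{n<..<a}. s j) * (c n ^ 2 * A.R n))"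
        unfolding S1(1) sum_distrib_left
        by (rule sum.cong) (simp_all add: f1_def H phiR power2_eq_square mult_ac)
      also have "\<dots> = - c a * (-1 * cis \<theta> * A.Q a)"
        using A.lower_sum[of N a] MN by (simp add: D_def s_def)
      also have "Sum_any f2 = c a * (\<Sum>m\<in>{a<..M}. (- (-1))^nat(m-a) * (\<Prod>j\<in>{a<..<m}. s j) * (c m ^ 2 * A.R m))"
        unfolding S2(1) sum_distrib_left
      proof (rule sum.cong)
        fix m assume m: "m \<in> {a<..M}"
        have "nat (m - a + 1) = Suc (nat (m - a))" using m by auto
        then have sg: "(-1::complex)^nat(m-a) * (-1)^nat(m-a+1) = - 1"
          by (simp add: power_add[symmetric] power_Suc mult_2[symmetric] power_mult)
        have "f2 ((m, a), PsiS m) = - ((-1::complex)^nat(m-a) * (-1)^nat(m-a+1)) * (c a * (prod s {a<..<m} * (c m * c m * A.R m)))"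
          using m by (simp add: f2_def H phiR mult_ac)
        then show "f2 ((m, a), PsiS m) = c a * ((- (-1)) ^ nat (m - a) * prod s {a<..<m} * (c m ^ 2 * A.R m))"
          unfolding sg by (simp add: power2_eq_square)
      qed simp
      also have "\<dots> = c a * (- (-1) * A.Q (a+1))"
        using A.upper_sum[of a M] MN by (simp add: D_def s_def)
      also have "- c a * (-1 * cis \<theta> * A.Q a) + c a * (- (-1) * A.Q (a+1)) = (cis \<theta> + cis (- \<theta>)) * (c a * A.R a)"
      proof -
        have zz: "cis (-\<theta>) * cis \<theta> = 1" by (simp add: cis_mult)
        show ?thesis unfolding A.QR1[of a] A.QR2[of a] by (rule aux2[OF zz])
      qed
      finally show ?thesis using fin12 PsiS phiR by simp
    qed
  then show ?thesis unfolding comm_H_welldef_def by auto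
qed



lemma trig_if: "trig f lo hi \<Longrightarrow> trig g lo hi \<Longrightarrow> trig (\<lambda>t. if P then f t else g t) lo hi"
  by (cases P) auto

lemma trig_lin_p: "trig (\<lambda>t. a + b * cis t) (-1) 1"
proof -
  have "trig (\<lambda>t. a + b * cis (of_int 1 * t)) (-1) 1"
    by (intro trig_add trig_widen[OF trig_const] trig_widen[OF trig_cis]) auto
  then show ?thesis by simp
qed

lemma trig_lin_m: "trig (\<lambda>t. a + b * cis (- t)) (-1) 1"
proof -
  have "trig (\<lambda>t. a + b * cis (of_int (-1) * t)) (-1) 1"
    by (intro trig_add trig_widen[OF trig_const] trig_widen[OF trig_cis]) auto
  then show ?thesis by simp
qed

lemma trig_one: "trig (\<lambda>t. 1) (-1) 1"
  by (rule trig_widen[OF trig_const]) auto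

lemma aux3:
  fixes z zi w wi s c E W P :: complex
  assumes "z * zi = 1" "w * wi = 1" "c ^ 2 = 1 + s ^ 2" and that: "X * Y = P"
  shows "(1 - z * wi) * (c * (W * X) * (c * (E * Y))) =
         E * W * ((1 + s * wi) * (1 - s * z)) * P - (E * z) * (W * wi) * ((1 - s * w) * (1 + s * zi)) * P"
proof -
  have "(1 - z * wi) * (c * (W * X) * (c * (E * Y))) = (1 - z * wi) * (c^2) * E * W * P"
    using that by (simp add: power2_eq_square mult_ac)
  also have "\<dots> = (1 - z * wi) * (1 + s^2) * E * W * P" using assms(3) by simp
  also have "\<dots> = E * W * ((1 + s * wi) * (1 - s * z)) * P - (E * z) * (W * wi) * ((1 - s * w) * (1 + s * zi)) * P"
    using assms(1,2) by algebra
  finally show ?thesis .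
qed

lemma trig_lin_p': "trig (\<lambda>t. a - b * cis t) (-1) 1"
  using trig_lin_p[of a "-b"] by simp

lemma trig_cis1: "trig (\<lambda>t. cis (of_int k * t)) k k"
  using trig_cis[of 1 k] by simp

lemma part3:
  fixes \<gamma> :: "int \<Rightarrow> real" and \<theta>1 :: real and q :: int
  assumes fin: "finite {n. \<gamma> n \<noteq> 0}"
  shows "acomm_welldef (phis \<gamma> \<theta>1) (\<lambda>h. fourier_coeff (\<lambda>\<theta>2. phi \<gamma> \<theta>2 h) q) \<and>
         acomm_fs (phis \<gamma> \<theta>1) (\<lambda>h. fourier_coeff (\<lambda>\<theta>2. phi \<gamma> \<theta>2 h) q)
           = Prod_any (\<lambda>j. (1 + complex_of_real (sinh (\<gamma> j)) * cis (- \<theta>1))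
                             * (1 - complex_of_real (sinh (\<gamma> j)) * cis \<theta>1))
               * cis (- (of_int q * \<theta>1))"
proof -
  define D where "D = {n. \<gamma> n \<noteq> 0}"
  define s where "s j = complex_of_real (sinh (\<gamma> j))" for j
  define c where "c j = complex_of_real (cosh (\<gamma> j))" for j
  define d where "d = int (card D)"
  define K where "K = 2 * d"
  have finD: "finite D" using fin D_def by simp
  have sD: "\<And>j. j \<notin> D \<Longrightarrow> s j = 0" by (simp add: D_def s_def)
  have cs: "\<And>j. c j ^ 2 = 1 + s j ^ 2" unfolding c_def s_def
    by (metis cosh_square_eq add.commute of_real_add of_real_power of_real_1)
  have d0: "0 \<le> d" by (simp add: d_def)
  have phiE: "phi \<gamma> t (Psi n) = c n * (cis (of_int n * t) * ((\<Prod>j\<in>D. if j < n then 1 + s j * cis (- t) else 1)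
      * (\<Prod>j\<in>D. if n < j then 1 - s j * cis t else 1)))" for t n
    using phi_conv[OF fin, of t n] unfolding D_def[symmetric] s_def[symmetric] c_def[symmetric] Rf_def
    by (simp add: mult.assoc cong: if_cong)
  have phisE: "phis \<gamma> \<theta>1 (PsiS n) = c n * (cis (- (of_int n * \<theta>1)) * ((\<Prod>j\<in>D. if j < n then 1 - s j * cis \<theta>1 else 1)
      * (\<Prod>j\<in>D. if n < j then 1 + s j * cis (- \<theta>1) else 1)))" for n
    using phis_conv[OF fin, of \<theta>1 n] unfolding D_def[symmetric] s_def[symmetric] c_def[symmetric] Rf_def
    by (simp add: mult.assoc cong: if_cong)
  have trig_phi: "trig (\<lambda>t. phi \<gamma> t (Psi n)) (n - K) (n + K)" for n
  proof -
    have "trig (\<lambda>t. c n * (cis (of_int n * t) * ((\<Prod>j\<in>D. if j < n then 1 + s j * cis (- t) else 1)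
      * (\<Prod>j\<in>D. if n < j then 1 - s j * cis t else 1)))) (n + (- int (card D) + - int (card D))) (n + (int (card D) + int (card D)))"
      by (intro trig_scale trig_mult trig_cis1 trig_prod finD trig_if trig_lin_m trig_lin_p' trig_one)
    then show ?thesis unfolding phiE by (rule trig_widen) (auto simp: K_def d_def)
  qed
  define Y where "Y n t = cis (-(of_int (n+1) * \<theta>1)) * cis (of_int (n+1) * t) *
     (\<Prod>j\<in>D. if j \<le> n then (1 - s j * cis \<theta>1) * (1 + s j * cis (- t)) else (1 + s j * cis (- \<theta>1)) * (1 - s j * cis t))" for n t
  have trig_Y: "trig (Y n) (n + 1 - d) (n + 1 + d)" for n
  proof -
    have "trig (\<lambda>t. cis (-(of_int (n+1) * \<theta>1)) * cis (of_int (n+1) * t) *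
     (\<Prod>j\<in>D. if j \<le> n then (1 - s j * cis \<theta>1) * (1 + s j * cis (- t)) else (1 + s j * cis (- \<theta>1)) * (1 - s j * cis t)))
       ((n + 1) + - int (card D)) ((n+1) + int (card D))"
      by (intro trig_mult trig_cis trig_prod finD trig_if trig_scale trig_lin_m trig_lin_p')
    then show ?thesis unfolding Y_def[abs_def] d_def by simp
  qed
  have tele3: "(1 - cis t * cis (-\<theta>1)) * (phis \<gamma> \<theta>1 (PsiS n) * phi \<gamma> t (Psi n)) = Y (n - 1) t - Y n t" for t n
  proof -
    define PP where "PP = (\<Prod>j\<in>D-{n}. if j < n then (1 - s j * cis \<theta>1) * (1 + s j * cis (- t)) else (1 + s j * cis (- \<theta>1)) * (1 - s j * cis t))"
    have X: "((\<Prod>j\<in>D. if j < n then 1 - s j * cis \<theta>1 else 1) * (\<Prod>j\<in>D. if n < j then 1 + s j * cis (- \<theta>1) else 1))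
      * ((\<Prod>j\<in>D. if j < n then 1 + s j * cis (- t) else 1) * (\<Prod>j\<in>D. if n < j then 1 - s j * cis t else 1)) = PP"
    proof -
      have "((\<Prod>j\<in>D. if j < n then 1 - s j * cis \<theta>1 else 1) * (\<Prod>j\<in>D. if n < j then 1 + s j * cis (- \<theta>1) else 1))
        * ((\<Prod>j\<in>D. if j < n then 1 + s j * cis (- t) else 1) * (\<Prod>j\<in>D. if n < j then 1 - s j * cis t else 1))
        = (\<Prod>j\<in>D. ((if j < n then 1 - s j * cis \<theta>1 else 1) * (if n < j then 1 + s j * cis (- \<theta>1) else 1))
             * ((if j < n then 1 + s j * cis (- t) else 1) * (if n < j then 1 - s j * cis t else 1)))"
        by (simp add: prod.distrib)
      also have "\<dots> = (\<Prod>j\<in>D-{n}. ((if j < n then 1 - s j * cis \<theta>1 else 1) * (if n < j then 1 + s j * cis (- \<theta>1) else 1))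
             * ((if j < n then 1 + s j * cis (- t) else 1) * (if n < j then 1 - s j * cis t else 1)))"
        by (subst prod_pick[OF finD, of n]) auto
      also have "\<dots> = PP" unfolding PP_def by (rule prod.cong) auto
      finally show ?thesis .
    qed
    have Y1: "Y (n - 1) t = cis (of_int n * t) * cis (- (of_int n * \<theta>1)) * ((1 + s n * cis (- \<theta>1)) * (1 - s n * cis t)) * PP"
    proof -
      define F where "F j = (if j \<le> n - 1 then (1 - s j * cis \<theta>1) * (1 + s j * cis (- t)) else (1 + s j * cis (- \<theta>1)) * (1 - s j * cis t))" for j
      have A: "(\<Prod>j\<in>D. F j) = F n * (\<Prod>j\<in>D-{n}. F j)"
        by (rule prod_pick[OF finD]) (cases "n \<in> D"; simp add: sD F_def)
      have B: "F n = (1 + s n * cis (- \<theta>1)) * (1 - s n * cis t)" by (simp add: F_def)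
      have C: "(\<Prod>j\<in>D-{n}. F j) = PP" unfolding PP_def F_def by (rule prod.cong) auto
      have "(\<Prod>j\<in>D. if j \<le> n - 1 then (1 - s j * cis \<theta>1) * (1 + s j * cis (- t)) else (1 + s j * cis (- \<theta>1)) * (1 - s j * cis t))
         = ((1 + s n * cis (- \<theta>1)) * (1 - s n * cis t)) * PP"
        using A B C unfolding F_def by simp
      then show ?thesis unfolding Y_def by (simp add: mult_ac)
    qed
    have Y2: "Y n t = (cis (of_int n * t) * cis t) * (cis (- (of_int n * \<theta>1)) * cis (-\<theta>1)) * ((1 - s n * cis \<theta>1) * (1 + s n * cis (- t))) * PP"
    proof -
      define F where "F j = (if j \<le> n then (1 - s j * cis \<theta>1) * (1 + s j * cis (- t)) else (1 + s j * cis (- \<theta>1)) * (1 - s j * cis t))" for j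
      have A: "(\<Prod>j\<in>D. F j) = F n * (\<Prod>j\<in>D-{n}. F j)"
        by (rule prod_pick[OF finD]) (cases "n \<in> D"; simp add: sD F_def)
      have B: "F n = (1 - s n * cis \<theta>1) * (1 + s n * cis (- t))" by (simp add: F_def)
      have C: "(\<Prod>j\<in>D-{n}. F j) = PP" unfolding PP_def F_def by (rule prod.cong) auto
      have "(\<Prod>j\<in>D. if j \<le> n then (1 - s j * cis \<theta>1) * (1 + s j * cis (- t)) else (1 + s j * cis (- \<theta>1)) * (1 - s j * cis t))
         = ((1 - s n * cis \<theta>1) * (1 + s n * cis (- t))) * PP"
        using A B C unfolding F_def by simp
      moreover have "cis (of_int (n+1) * t) = cis (of_int n * t) * cis t" by (simp add: cis_mult distrib_right)
      moreover have "cis (- (of_int (n+1) * \<theta>1)) = cis (- (of_int n * \<theta>1)) * cis (-\<theta>1)" by (simp add: cis_mult distrib_right)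
      ultimately show ?thesis unfolding Y_def by (simp add: mult_ac)
    qed
    show ?thesis unfolding phiE phisE Y1 Y2
      by (rule aux3[OF _ _ cs X]) (simp_all add: cis_mult)
  qed

  define Yc where "Yc h = fourier_coeff (\<lambda>\<theta>2. phi \<gamma> \<theta>2 h) q" for h
  define I where "I = {q-K..q+K}"
  have finI: "finite I" by (simp add: I_def)
  have supp: "x \<in> (\<lambda>n. (PsiS n, Psi n)) ` I" if nz: "acomm_term (phis \<gamma> \<theta>1) Yc x \<noteq> 0" for x
  proof -
    obtain g h where x: "x = (g,h)" by fastforce
    show ?thesis
    proof (cases g)
      case (Psi m) then show ?thesis using nz x by (simp add: acomm_term_def phis_def)
    next
      case (PsiS m)
      show ?thesis
      proof (cases h)
        case (PsiS k) then show ?thesis using nz x by (simp add: acomm_term_def Yc_def phi_def fourier_coeff_def)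
      next
        case (Psi n)
        have mn: "m = n" using nz x PsiS Psi by (auto simp: acomm_term_def split: if_splits)
        have "Yc (Psi n) \<noteq> 0" using nz x PsiS Psi by (auto simp: acomm_term_def)
        then have "n - K \<le> q \<and> q \<le> n + K" unfolding Yc_def using fc_zero[OF trig_phi[of n], of q] by force
        then show ?thesis using x PsiS Psi mn by (auto simp: I_def)
      qed
    qed
  qed
  have SA3: "Sum_any (acomm_term (phis \<gamma> \<theta>1) Yc) = (\<Sum>n\<in>I. acomm_term (phis \<gamma> \<theta>1) Yc (PsiS n, Psi n))"
     "finite {x. acomm_term (phis \<gamma> \<theta>1) Yc x \<noteq> 0}"
    by (rule SA[OF finI _ supp]; auto simp: inj_on_def)+
  define F where "F t = (\<Sum>n\<in>I. phis \<gamma> \<theta>1 (PsiS n) * phi \<gamma> t (Psi n))" for t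
  have trigF: "trig F (q - 2*K) (q + 2*K)"
    unfolding F_def[abs_def]
    by (rule trig_sum[OF finI], rule trig_scale, rule trig_widen[OF trig_phi]) (auto simp: I_def)
  have fcF: "fourier_coeff F q = (\<Sum>n\<in>I. phis \<gamma> \<theta>1 (PsiS n) * Yc (Psi n))"
  proof -
    have "fourier_coeff F q = (\<Sum>n\<in>I. fourier_coeff (\<lambda>t. phis \<gamma> \<theta>1 (PsiS n) * phi \<gamma> t (Psi n)) q)"
      unfolding F_def[abs_def]
      by (rule fc_sum[OF finI, of _ "q - 2*K" "q + 2*K"], rule trig_scale, rule trig_widen[OF trig_phi]) (auto simp: I_def)
    then show ?thesis by (simp add: fc_scale Yc_def)
  qed
  have teleF: "(1 - cis t * cis (-\<theta>1)) * F t = Y (q-K-1) t - Y (q+K) t" for t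
  proof -
    have "(1 - cis t * cis (-\<theta>1)) * F t = (\<Sum>n\<in>I. Y (n - 1) t - Y n t)"
      unfolding F_def sum_distrib_left tele3 ..
    also have "\<dots> = (\<Sum>n\<in>{q-K..q+K}. (- Y n t) - (- Y (n - 1) t))" unfolding I_def by (simp add: algebra_simps)
    also have "\<dots> = - Y (q+K) t - (- Y (q-K-1) t)" by (rule tele_int) (use d0 in \<open>auto simp: K_def\<close>)
    finally show ?thesis by simp
  qed
  have trigcF: "trig (\<lambda>t. cis (-\<theta>1) * (cis t * F t)) (1 + (q - 2*K)) (1 + (q + 2*K))"
    using trig_scale[OF trig_mult[OF trig_cis1[of 1] trigF], of "cis (-\<theta>1)"] by simp
  have rec: "fourier_coeff F k - cis (-\<theta>1) * fourier_coeff F (k - 1)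
      = fourier_coeff (Y (q-K-1)) k - fourier_coeff (Y (q+K)) k" for k
  proof -
    have "fourier_coeff F k - cis (-\<theta>1) * fourier_coeff F (k - 1)
        = fourier_coeff (\<lambda>t. F t - cis (-\<theta>1) * (cis t * F t)) k"
      by (simp add: fc_diff[OF trigF trigcF] fc_scale fc_shift)
    also have "(\<lambda>t. F t - cis (-\<theta>1) * (cis t * F t)) = (\<lambda>t. Y (q-K-1) t - Y (q+K) t)"
    proof
      fix t show "F t - cis (-\<theta>1) * (cis t * F t) = Y (q-K-1) t - Y (q+K) t"
        using teleF[of t] by (simp add: algebra_simps)
    qed
    also have "fourier_coeff (\<lambda>t. Y (q-K-1) t - Y (q+K) t) k = fourier_coeff (Y (q-K-1)) k - fourier_coeff (Y (q+K)) k"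
      by (rule fc_diff[OF trig_Y trig_Y])
    finally show ?thesis .
  qed
  define G where "G k = cis (of_int k * \<theta>1) * fourier_coeff F k" for k
  have stepG: "G k - G (k - 1) = cis (of_int k * \<theta>1) * fourier_coeff (Y (q-K-1)) k
      - cis (of_int k * \<theta>1) * fourier_coeff (Y (q+K)) k" for k
  proof -
    have "cis (of_int (k - 1) * \<theta>1) = cis (of_int k * \<theta>1) * cis (-\<theta>1)" by (simp add: cis_mult algebra_simps)
    then have "G k - G (k - 1) = cis (of_int k * \<theta>1) * (fourier_coeff F k - cis (-\<theta>1) * fourier_coeff F (k - 1))"
      unfolding G_def by (simp add: algebra_simps)
    then show ?thesis unfolding rec by (simp add: algebra_simps)
  qed
  define lo where "lo = q - 2*K"
  have "(\<Sum>k\<in>{lo..q}. G k - G (k - 1)) = G q - G (lo - 1)"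
    by (rule tele_int) (use d0 in \<open>auto simp: lo_def K_def\<close>)
  moreover have "G (lo - 1) = 0"
    unfolding G_def using fc_zero[OF trigF, of "lo - 1"] by (simp add: lo_def)
  moreover have "(\<Sum>k\<in>{lo..q}. G k - G (k - 1)) = (\<Sum>k\<in>{lo..q}. cis (of_int k * \<theta>1) * fourier_coeff (Y (q-K-1)) k)
      - (\<Sum>k\<in>{lo..q}. cis (of_int k * \<theta>1) * fourier_coeff (Y (q+K)) k)"
    unfolding stepG by (rule sum_subtractf)
  moreover have "(\<Sum>k\<in>{lo..q}. cis (of_int k * \<theta>1) * fourier_coeff (Y (q+K)) k) = 0"
  proof (rule sum.neutral, intro ballI)
    fix k assume k: "k \<in> {lo..q}"
    have "k < q + K + 1 - d" using k d0 by (auto simp: K_def)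
    then show "cis (of_int k * \<theta>1) * fourier_coeff (Y (q+K)) k = 0" using fc_zero[OF trig_Y[of "q+K"], of k] by simp
  qed
  moreover have "(\<Sum>k\<in>{lo..q}. cis (of_int k * \<theta>1) * fourier_coeff (Y (q-K-1)) k) = Y (q-K-1) \<theta>1"
  proof -
    have "trig (Y (q-K-1)) lo q"
      by (rule trig_widen[OF trig_Y]) (use d0 in \<open>auto simp: lo_def K_def\<close>)
    from trig_eval[OF this, of \<theta>1] show ?thesis by (simp add: mult.commute)
  qed
  moreover have "Y (q-K-1) \<theta>1 = (\<Prod>j\<in>D. (1 + s j * cis (- \<theta>1)) * (1 - s j * cis \<theta>1))"
  proof -
    have "cis (-(of_int (q-K-1+1) * \<theta>1)) * cis (of_int (q-K-1+1) * \<theta>1) = 1" by (simp add: cis_mult)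
    then show ?thesis unfolding Y_def by (simp add: mult_ac cong: if_cong)
  qed
  moreover have "Prod_any (\<lambda>j. (1 + complex_of_real (sinh (\<gamma> j)) * cis (- \<theta>1)) * (1 - complex_of_real (sinh (\<gamma> j)) * cis \<theta>1))
      = (\<Prod>j\<in>D. (1 + s j * cis (- \<theta>1)) * (1 - s j * cis \<theta>1))"
    unfolding s_def by (rule Prod_any.expand_superset[OF finD]) (auto simp: D_def)
  ultimately have Gq: "G q = Prod_any (\<lambda>j. (1 + complex_of_real (sinh (\<gamma> j)) * cis (- \<theta>1)) * (1 - complex_of_real (sinh (\<gamma> j)) * cis \<theta>1))"
    by simp
  have "fourier_coeff F q = cis (- (of_int q * \<theta>1)) * G q"
    unfolding G_def by (simp add: mult.assoc[symmetric] cis_mult)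
  then have fq: "fourier_coeff F q = Prod_any (\<lambda>j. (1 + complex_of_real (sinh (\<gamma> j)) * cis (- \<theta>1)) * (1 - complex_of_real (sinh (\<gamma> j)) * cis \<theta>1)) * cis (- (of_int q * \<theta>1))"
    unfolding Gq by (simp add: mult.commute)
  have eqY: "(\<lambda>h. fourier_coeff (\<lambda>\<theta>2. phi \<gamma> \<theta>2 h) q) = Yc" unfolding Yc_def ..
  have "acomm_fs (phis \<gamma> \<theta>1) Yc = fourier_coeff F q"
    unfolding acomm_fs_def SA3(1) fcF by (rule sum.cong) (auto simp: acomm_term_def)
  then show ?thesis unfolding eqY acomm_welldef_def using SA3(2) fq by simp
qed


theorem propositionF2:
  fixes \<gamma> :: "int \<Rightarrow> real"
  assumes nonneg: "\<And>n. \<gamma> n \<ge> 0"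
    and fin: "finite {n. \<gamma> n \<noteq> 0}"
    and Sless: "\<And>n. sinh (\<gamma> n) < 1"
  shows "(\<forall>\<theta>. comm_H_welldef (Hcoef \<gamma>) (phi \<gamma> \<theta>) \<and>
            comm_H (Hcoef \<gamma>) (phi \<gamma> \<theta>) = (\<lambda>g. - (cis \<theta> + cis (- \<theta>)) * phi \<gamma> \<theta> g))
    \<and> (\<forall>\<theta>. comm_H_welldef (Hcoef \<gamma>) (phis \<gamma> \<theta>) \<and>
            comm_H (Hcoef \<gamma>) (phis \<gamma> \<theta>) = (\<lambda>g. (cis \<theta> + cis (- \<theta>)) * phis \<gamma> \<theta> g))
    \<and> (\<forall>\<theta>\<^sub>1 (q::int).
           acomm_welldef (phis \<gamma> \<theta>\<^sub>1) (\<lambda>h. fourier_coeff (\<lambda>\<theta>\<^sub>2. phi \<gamma> \<theta>\<^sub>2 h) q) \<and>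
           acomm_fs (phis \<gamma> \<theta>\<^sub>1) (\<lambda>h. fourier_coeff (\<lambda>\<theta>\<^sub>2. phi \<gamma> \<theta>\<^sub>2 h) q)
             = Prod_any (\<lambda>j. (1 + complex_of_real (sinh (\<gamma> j)) * cis (- \<theta>\<^sub>1))
                             * (1 - complex_of_real (sinh (\<gamma> j)) * cis \<theta>\<^sub>1))
               * cis (- (of_int q * \<theta>\<^sub>1)))"
    using part1[OF fin] part2[OF fin] part3[OF fin] by blast

end
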